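(* Let $f=e^{-\psi}\colon\mathbb R^d\to[0,\infty)$ be an upper semi-continuous log-concave function, $u\in\operatorname{supp}f$, $v\in\mathbb R^d$, $\nu\in\mathbb R$. Then $(v,\nu)\in N_{\operatorname{epi}\psi}((u,\psi(u)))$ if and only if $\bigl(v,-\nu/f(u)\bigr)\in N_{\mathrm{lift}(f)}((u,f(u)))$. Furthermore, $P_d\bigl(N_{\mathrm{lift}(f)}((u,f(u)))\bigr)\subseteq N_{[f\ge f(u)]}(u)$.
   Context: $\operatorname{supp}f=\{x:f(x)>0\}$; $\operatorname{epi}\psi=\{(x,\xi):\psi(x)<\infty,\xi\ge\psi(x)\}$. Lifting $\mathrm{lift}(f)=\{(x,y)\in\mathbb R^d\times\mathbb R:x\in\overline{\operatorname{supp}f},|y|\le f(x)\}$. Fréchet normal cone of $A\subset\mathbb R^n$ at $a_0\in A$: $N_A(a_0)=\{v:\forall\varepsilon>0\,\exists\delta>0:\langle v,a-a_0\rangle\le\varepsilon|a-a_0|\ \forall a\in A,|a-a_0|\le\delta\}$. $[f\ge t]=\{x:f(x)\ge t\}$. $P_d\colon\mathbb R^{d+1}\to\mathbb R^d$ is the orthogonal projection onto the first $d$ coordinates. *)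

theory Defs
  imports "HOL-Analysis.Analysis"
begin

definition supp :: "('a \<Rightarrow> real) \<Rightarrow> 'a set" where
  "supp f = {x. f x > 0}"

definition usc :: "('a::topological_space \<Rightarrow> real) \<Rightarrow> bool" where
  "usc f \<longleftrightarrow> (\<forall>x t. f x < t \<longrightarrow> (\<forall>\<^sub>F y in at x. f y < t))"

definition log_concave :: "('a::real_vector \<Rightarrow> real) \<Rightarrow> bool" where
  "log_concave f \<longleftrightarrow> (\<forall>x. f x \<ge> 0) \<and>
     (\<forall>x y t. 0 < t \<and> t < 1 \<longrightarrow>
        f x powr (1 - t) * f y powr t \<le> f ((1 - t) *\<^sub>R x + t *\<^sub>R y))"

definition psi :: "('a \<Rightarrow> real) \<Rightarrow> 'a \<Rightarrow> ereal" where
  "psi f x = (if f x > 0 then ereal (- ln (f x)) else \<infinity>)"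

definition epi :: "('a \<Rightarrow> ereal) \<Rightarrow> ('a \<times> real) set" where
  "epi \<psi> = {(x, \<xi>). \<psi> x < \<infinity> \<and> ereal \<xi> \<ge> \<psi> x}"

definition lift :: "('a::topological_space \<Rightarrow> real) \<Rightarrow> ('a \<times> real) set" where
  "lift f = {(x, y). x \<in> closure (supp f) \<and> \<bar>y\<bar> \<le> f x}"

definition normal_cone :: "'a::real_inner set \<Rightarrow> 'a \<Rightarrow> 'a set" where
  "normal_cone A a0 = {v. \<forall>\<epsilon>>0. \<exists>\<delta>>0. \<forall>a\<in>A. norm (a - a0) \<le> \<delta> \<longrightarrow>
       inner v (a - a0) \<le> \<epsilon> * norm (a - a0)}"

end

theory Submission
  imports Defs
begin

lemma norm_pair_scale:
  fixes a :: "'a::real_normed_vector" and b b' K :: real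
  assumes "K \<ge> 1" "\<bar>b'\<bar> \<le> K * \<bar>b\<bar>"
  shows "norm (a, b') \<le> K * norm (a, b)"
proof -
  have "(norm a)\<^sup>2 + b'\<^sup>2 \<le> K\<^sup>2 * ((norm a)\<^sup>2 + b\<^sup>2)"
  proof -
    have "(norm a)\<^sup>2 \<le> K\<^sup>2 * (norm a)\<^sup>2"
      using assms(1) by (simp add: mult_le_cancel_right1 power_one_right one_le_power)
    moreover have "b'\<^sup>2 \<le> (K * \<bar>b\<bar>)\<^sup>2"
      using assms(2) by (metis abs_ge_zero abs_le_square_iff abs_mult abs_of_nonneg order_trans power2_abs)
    ultimately show ?thesis by (simp add: power_mult_distrib algebra_simps)
  qed
  hence "sqrt ((norm a)\<^sup>2 + b\<^sup>2 * 1 + b'\<^sup>2 - b\<^sup>2) \<le> sqrt (K\<^sup>2 * ((norm a)\<^sup>2 + b\<^sup>2))"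
    by simp
  thus ?thesis using assms(1) by (simp add: norm_Pair real_sqrt_mult)
qed

lemma transfer_nc:
  fixes A B :: "('a::real_inner \<times> real) set" and u v :: 'a
  assumes deriv: "(g has_real_derivative L) (at s0)"
    and map: "\<exists>\<delta>0>0. \<forall>x s. (x,s)\<in>A \<and> norm ((x,s)-(u,s0)) \<le> \<delta>0 \<longrightarrow> (x, g s) \<in> B"
    and nc: "(v, lam) \<in> normal_cone B (u, g s0)"
  shows "(v, lam*L) \<in> normal_cone A (u, s0)"
  unfolding normal_cone_def
proof (intro CollectI allI impI)
  fix \<epsilon> :: real assume e: "\<epsilon> > 0"
  obtain \<delta>0 where d0: "\<delta>0 > 0" "\<And>x s. (x,s)\<in>A \<Longrightarrow> norm ((x,s)-(u,s0)) \<le> \<delta>0 \<Longrightarrow> (x, g s) \<in> B"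
    using map by blast
  define K where "K = \<bar>L\<bar> + 1"
  have K: "K \<ge> 1" unfolding K_def by simp
  define e1 where "e1 = \<epsilon> / (2*K)"
  define e2 where "e2 = min 1 (\<epsilon> / (2*(\<bar>lam\<bar>+1)))"
  have e1: "e1 > 0" using e K unfolding e1_def by simp
  have e2: "e2 > 0" "e2 \<le> 1" "e2 \<le> \<epsilon> / (2*(\<bar>lam\<bar>+1))" using e unfolding e2_def by auto
  obtain \<delta>1 where d1: "\<delta>1 > 0" "\<And>a. a\<in>B \<Longrightarrow> norm (a - (u, g s0)) \<le> \<delta>1 \<Longrightarrow>
      inner (v, lam) (a - (u, g s0)) \<le> e1 * norm (a - (u, g s0))"
    using nc e1 unfolding normal_cone_def by blast
  obtain \<delta>2 where d2: "\<delta>2 > 0" "\<And>s. norm (s - s0) < \<delta>2 \<Longrightarrow>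
      norm (g s - g s0 - L * (s - s0)) \<le> e2 * norm (s - s0)"
    using deriv e2(1) unfolding has_field_derivative_def has_derivative_at_alt by blast
  define \<delta> where "\<delta> = min \<delta>0 (min (\<delta>2/2) (\<delta>1/K))"
  have "\<delta> > 0" using d0 d1 d2 K unfolding \<delta>_def by simp
  moreover have "\<forall>a\<in>A. norm (a - (u, s0)) \<le> \<delta> \<longrightarrow>
       inner (v, lam*L) (a - (u, s0)) \<le> \<epsilon> * norm (a - (u, s0))"
  proof (intro ballI impI)
    fix a assume aA: "a \<in> A" and an: "norm (a - (u, s0)) \<le> \<delta>"
    obtain x s where a: "a = (x, s)" by (cases a)
    define t where "t = g s"
    define r where "r = t - g s0 - L * (s - s0)"
    have nd: "norm (x - u, s - s0) \<le> \<delta>" using an a by simp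
    have ss: "\<bar>s - s0\<bar> \<le> norm (x - u, s - s0)"
      using norm_snd_le[of "s - s0" "x - u"] by simp
    have "\<bar>s - s0\<bar> < \<delta>2" using ss nd d2(1) unfolding \<delta>_def by linarith
    hence r: "\<bar>r\<bar> \<le> e2 * \<bar>s - s0\<bar>" using d2(2)[of s] unfolding r_def t_def by simp
    have "\<bar>t - g s0\<bar> \<le> \<bar>L\<bar> * \<bar>s - s0\<bar> + \<bar>r\<bar>"
    proof -
      have "t - g s0 = L * (s - s0) + r" unfolding r_def by simp
      hence "\<bar>t - g s0\<bar> \<le> \<bar>L * (s - s0)\<bar> + \<bar>r\<bar>" by (metis abs_triangle_ineq)
      thus ?thesis by (simp add: abs_mult)
    qed
    also have "\<dots> \<le> K * \<bar>s - s0\<bar>"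
    proof -
      have "e2 * \<bar>s - s0\<bar> \<le> \<bar>s - s0\<bar>"
        using e2(1,2) by (intro mult_left_le_one_le) auto
      moreover have "K * \<bar>s - s0\<bar> = \<bar>L\<bar> * \<bar>s - s0\<bar> + \<bar>s - s0\<bar>"
        unfolding K_def by (simp add: distrib_right)
      ultimately show ?thesis using r by linarith
    qed
    finally have tb: "\<bar>t - g s0\<bar> \<le> K * \<bar>s - s0\<bar>" .
    have n2: "norm (x - u, t - g s0) \<le> K * norm (x - u, s - s0)"
      by (rule norm_pair_scale[OF K tb])
    have "K * norm (x - u, s - s0) \<le> K * (\<delta>1 / K)"
      using nd K unfolding \<delta>_def by (intro mult_left_mono) auto
    hence n3: "norm ((x, t) - (u, g s0)) \<le> \<delta>1" using n2 K by simp
    have inB: "(x, t) \<in> B" using d0(2)[OF aA[unfolded a]] an a unfolding \<delta>_def t_def by simp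
    have main: "inner v (x - u) + lam * (t - g s0) \<le> e1 * norm (x - u, t - g s0)"
      using d1(2)[OF inB n3] by simp
    have "e1 * norm (x - u, t - g s0) \<le> e1 * (K * norm (x - u, s - s0))"
      using n2 e1 by (intro mult_left_mono) auto
    also have "\<dots> = \<epsilon>/2 * norm (x - u, s - s0)" using K unfolding e1_def by simp
    finally have m1: "inner v (x - u) + lam * (t - g s0) \<le> \<epsilon>/2 * norm (x - u, s - s0)"
      using main by linarith
    have "\<bar>lam * r\<bar> \<le> \<bar>lam\<bar> * (e2 * \<bar>s - s0\<bar>)"
      using r by (simp add: abs_mult mult_left_mono)
    also have "\<dots> \<le> (\<bar>lam\<bar> + 1) * (\<epsilon> / (2*(\<bar>lam\<bar>+1))) * norm (x - u, s - s0)"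
    proof -
      have "e2 * \<bar>s - s0\<bar> \<le> (\<epsilon> / (2*(\<bar>lam\<bar>+1))) * norm (x - u, s - s0)"
        using e2 ss by (intro mult_mono) auto
      hence "\<bar>lam\<bar> * (e2 * \<bar>s - s0\<bar>) \<le> \<bar>lam\<bar> * ((\<epsilon> / (2*(\<bar>lam\<bar>+1))) * norm (x - u, s - s0))"
        by (intro mult_left_mono) auto
      also have "\<dots> \<le> (\<bar>lam\<bar> + 1) * ((\<epsilon> / (2*(\<bar>lam\<bar>+1))) * norm (x - u, s - s0))"
        using e by (intro mult_right_mono) auto
      finally show ?thesis by simp
    qed
    also have "\<dots> = \<epsilon>/2 * norm (x - u, s - s0)"
      by (simp add: field_simps)
    finally have m2: "\<bar>lam * r\<bar> \<le> \<epsilon>/2 * norm (x - u, s - s0)" .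
    have "lam * L * (s - s0) = lam * (t - g s0) - lam * r" unfolding r_def by (simp add: algebra_simps)
    hence "inner (v, lam*L) (a - (u, s0)) = inner v (x - u) + lam * (t - g s0) - lam * r"
      using a by simp
    also have "\<dots> \<le> \<epsilon> * norm (a - (u, s0))" using m1 m2 a by simp
    finally show "inner (v, lam*L) (a - (u, s0)) \<le> \<epsilon> * norm (a - (u, s0))" .
  qed
  ultimately show "\<exists>\<delta>>0. \<forall>a\<in>A. norm (a - (u, s0)) \<le> \<delta> \<longrightarrow>
       inner (v, lam*L) (a - (u, s0)) \<le> \<epsilon> * norm (a - (u, s0))" by blast
qed

theorem mainTheorem7:
  fixes f :: "'a::euclidean_space \<Rightarrow> real" and u v :: 'a and \<nu> :: real
  assumes "log_concave f" and "usc f" and "u \<in> supp f"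
  shows "((v, \<nu>) \<in> normal_cone (epi (psi f)) (u, real_of_ereal (psi f u)) \<longleftrightarrow>
           (v, - \<nu> / f u) \<in> normal_cone (lift f) (u, f u))
         \<and> fst ` normal_cone (lift f) (u, f u) \<subseteq> normal_cone {x. f x \<ge> f u} u"
proof -
  define c where "c = f u"
  have c: "c > 0" using assms(3) unfolding supp_def c_def by simp
  have psiu: "real_of_ereal (psi f u) = - ln c" using c unfolding psi_def c_def by simp
  have supp_sub: "supp f \<subseteq> closure (supp f)" by (rule closure_subset)
  have P1: "(v, \<nu>) \<in> normal_cone (epi (psi f)) (u, - ln c) \<Longrightarrow>
           (v, - \<nu> / c) \<in> normal_cone (lift f) (u, c)"
  proof -
    assume H: "(v, \<nu>) \<in> normal_cone (epi (psi f)) (u, - ln c)"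
    have D: "((\<lambda>y. - ln y) has_real_derivative (- inverse c)) (at c)"
      by (rule DERIV_minus[OF DERIV_ln[OF c]])
    have M: "\<exists>\<delta>0>0. \<forall>x s. (x,s)\<in>lift f \<and> norm ((x,s)-(u,c)) \<le> \<delta>0 \<longrightarrow>
               (x, (\<lambda>y. - ln y) s) \<in> epi (psi f)"
    proof (intro exI[of _ "c/2"] conjI allI impI)
      show "c/2 > 0" using c by simp
      fix x s assume xs: "(x,s)\<in>lift f \<and> norm ((x,s)-(u,c)) \<le> c/2"
      have "\<bar>s - c\<bar> \<le> norm (x - u, s - c)" using norm_snd_le[of "s - c" "x - u"] by simp
      moreover have "norm ((x,s)-(u,c)) = norm (x - u, s - c)" by simp
      ultimately have "\<bar>s - c\<bar> \<le> c/2" using xs by linarith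
      hence s0: "s > 0" using c by linarith
      have fs: "s \<le> f x" using xs unfolding lift_def by auto
      hence fx: "f x > 0" using s0 by linarith
      have "ln s \<le> ln (f x)" using s0 fs by simp
      thus "(x, (\<lambda>y. - ln y) s) \<in> epi (psi f)"
        using fx unfolding epi_def psi_def by simp
    qed
    have H': "(v, \<nu>) \<in> normal_cone (epi (psi f)) (u, (\<lambda>y. - ln y) c)" using H by simp
    have "(v, \<nu> * (- inverse c)) \<in> normal_cone (lift f) (u, c)"
      by (rule transfer_nc[OF D M H'])
    moreover have "\<nu> * (- inverse c) = - \<nu> / c" by (simp add: field_simps)
    ultimately show ?thesis by simp
  qed
  have P2: "(v, - \<nu> / c) \<in> normal_cone (lift f) (u, c) \<Longrightarrow>
           (v, \<nu>) \<in> normal_cone (epi (psi f)) (u, - ln c)"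
  proof -
    assume H: "(v, - \<nu> / c) \<in> normal_cone (lift f) (u, c)"
    have D: "((\<lambda>y. exp (- y)) has_real_derivative (- c)) (at (- ln c))"
    proof -
      have "((\<lambda>y. exp (- y)) has_real_derivative (exp (- (- ln c)) * (- 1))) (at (- ln c))"
        by (rule DERIV_chain2[OF DERIV_exp DERIV_minus[OF DERIV_ident]])
      thus ?thesis using c by simp
    qed
    have M: "\<exists>\<delta>0>0. \<forall>x s. (x,s)\<in>epi (psi f) \<and> norm ((x,s)-(u,- ln c)) \<le> \<delta>0 \<longrightarrow>
               (x, (\<lambda>y. exp (- y)) s) \<in> lift f"
    proof (intro exI[of _ "1"] conjI allI impI)
      show "(1::real) > 0" by simp
      fix x s assume xs: "(x,s)\<in>epi (psi f) \<and> norm ((x,s)-(u,- ln c)) \<le> 1"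
      have fx: "f x > 0" and le: "- ln (f x) \<le> s"
        using xs unfolding epi_def psi_def by (auto split: if_splits)
      have "exp (- s) \<le> exp (ln (f x))" using le by simp
      hence "exp (- s) \<le> f x" using fx by simp
      moreover have "x \<in> closure (supp f)" using fx supp_sub unfolding supp_def by auto
      ultimately show "(x, (\<lambda>y. exp (- y)) s) \<in> lift f"
        unfolding lift_def by simp
    qed
    have H': "(v, - \<nu> / c) \<in> normal_cone (lift f) (u, (\<lambda>y. exp (- y)) (- ln c))"
      using H c by simp
    have "(v, - \<nu> / c * (- c)) \<in> normal_cone (epi (psi f)) (u, - ln c)"
      by (rule transfer_nc[OF D M H'])
    moreover have "- \<nu> / c * (- c) = \<nu>" using c by (simp add: field_simps)
    ultimately show ?thesis by simp
  qed
  have P3: "fst ` normal_cone (lift f) (u, c) \<subseteq> normal_cone {x. f x \<ge> c} u"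
  proof
    fix w assume "w \<in> fst ` normal_cone (lift f) (u, c)"
    then obtain \<mu> where W: "(w, \<mu>) \<in> normal_cone (lift f) (u, c)" by force
    show "w \<in> normal_cone {x. f x \<ge> c} u"
      unfolding normal_cone_def
    proof (intro CollectI allI impI)
      fix \<epsilon> :: real assume e: "\<epsilon> > 0"
      then obtain \<delta> where d: "\<delta> > 0" "\<And>a. a \<in> lift f \<Longrightarrow> norm (a - (u, c)) \<le> \<delta> \<Longrightarrow>
          inner (w, \<mu>) (a - (u, c)) \<le> \<epsilon> * norm (a - (u, c))"
        using W unfolding normal_cone_def by blast
      have "\<forall>x\<in>{x. f x \<ge> c}. norm (x - u) \<le> \<delta> \<longrightarrow> inner w (x - u) \<le> \<epsilon> * norm (x - u)"
      proof (intro ballI impI)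
        fix x assume x: "x \<in> {x. f x \<ge> c}" and n: "norm (x - u) \<le> \<delta>"
        have "x \<in> closure (supp f)" using x c supp_sub unfolding supp_def by auto
        hence "(x, c) \<in> lift f" using x c unfolding lift_def by auto
        from d(2)[OF this] n show "inner w (x - u) \<le> \<epsilon> * norm (x - u)" by simp
      qed
      thus "\<exists>\<delta>>0. \<forall>x\<in>{x. f x \<ge> c}. norm (x - u) \<le> \<delta> \<longrightarrow> inner w (x - u) \<le> \<epsilon> * norm (x - u)"
        using d(1) by blast
    qed
  qed
  have E: "(v, \<nu>) \<in> normal_cone (epi (psi f)) (u, - ln c) \<longleftrightarrow>
           (v, - \<nu> / c) \<in> normal_cone (lift f) (u, c)" using P1 P2 by (rule iffI)
  show ?thesis unfolding psiu unfolding c_def[symmetric] using E P3 by (rule conjI)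
qed

end
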